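(* Let $P_S,H_{SR},H_{SD},H_{RD},\sigma_R^2,\sigma_D^2>0$ and $\eta\in(0,1]$. Set $C_{SR}=\log(1+P_SH_{SR}/\sigma_R^2)$, $m=P_SH_{SD}/\sigma_D^2$, $C_{SD}=b=\log(1+m)$, $a=C_{SR}-C_{SD}$, $c=\eta H_{SR}H_{RD}P_S/\sigma_D^2$, and assume $a>0$. Let $$f_2(\lambda)=\lambda b+(1-\lambda)\log\Big(1+m+\frac{c\lambda}{1-\lambda}\Big),\quad\lambda\in(0,1),$$ and consider $\max_{\lambda\in(0,1)}\min\{\lambda C_{SR},f_2(\lambda)\}$. Then: (i) the equation $\lambda C_{SR}=f_2(\lambda)$ has exactly one solution $\lambda_1\in(0,1)$, namely $$\lambda_1=\frac{-\frac1a\mathcal W_{-1}\!\big(-\frac{a}{c}e^{-\frac{a(1+m)}{c}}\big)-\frac{1+m}{c}}{1-\frac1a\mathcal W_{-1}\!\big(-\frac{a}{c}e^{-\frac{a(1+m)}{c}}\big)-\frac{1+m}{c}};$$ (ii) $f_2$ has exactly one stationary point $\lambda_2\in(0,1)$, namely $$\lambda_2=\frac{e^{\mathcal W_0\left(\frac{c-(1+m)}{e^{1+b}}\right)+b+1}-(1+m)}{e^{\mathcal W_0\left(\frac{c-(1+m)}{e^{1+b}}\right)+b+1}+c-(1+m)};$$ (iii) $\lambda^*=\max\{\lambda_1,\lambda_2\}$ attains the maximum of $\min\{\lambda C_{SR},f_2(\lambda)\}$ over $\lambda\in(0,1)$.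
   Context: $\log$ is the natural logarithm. $\mathcal W_0$ and $\mathcal W_{-1}$ denote the principal and the lower real branches of the Lambert W function (real solutions $w$ of $we^w=x$ with $w\ge-1$, resp. $w\le-1$). This is the optimal time-fraction problem for the "ideal" energy-harvesting relay protocol with energy accumulation (maximal ratio combining) at the destination, where the relay forwarding power is $\eta H_{SR}P_S\lambda/(1-\lambda)$. *)

theory Defs
  imports "HOL-Analysis.Analysis"
begin

definition LambertW0 :: "real \<Rightarrow> real" where
  "LambertW0 x = (THE w. w \<ge> -1 \<and> w * exp w = x)"

definition LambertWm1 :: "real \<Rightarrow> real" where
  "LambertWm1 x = (THE w. w \<le> -1 \<and> w * exp w = x)"

end

theory Submission
  imports Defs
begin


lemma xexp_deriv: "((\<lambda>w. w * exp w) has_real_derivative (exp w + w * exp w)) (at w)"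
  by (auto intro!: derivative_eq_intros)

lemma xexp_inc:
  fixes w1 w2 :: real
  assumes "-1 \<le> w1" "w1 < w2" shows "w1 * exp w1 < w2 * exp w2"
proof -
  obtain z where z: "w1 < z" "z < w2" "w2 * exp w2 - w1 * exp w1 = (w2 - w1) * (exp z + z * exp z)"
    using MVT2[OF assms(2), of "\<lambda>w. w * exp w" "\<lambda>w. exp w + w * exp w"] xexp_deriv by blast
  have "exp z + z * exp z = (1 + z) * exp z" by (simp add: algebra_simps)
  moreover have "(1 + z) * exp z > 0" using z assms by simp
  ultimately have "(w2 - w1) * (exp z + z * exp z) > 0" using assms by simp
  with z show ?thesis by simp
qed

lemma xexp_dec:
  fixes w1 w2 :: real
  assumes "w1 < w2" "w2 \<le> -1" shows "w1 * exp w1 > w2 * exp w2"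
proof -
  obtain z where z: "w1 < z" "z < w2" "w2 * exp w2 - w1 * exp w1 = (w2 - w1) * (exp z + z * exp z)"
    using MVT2[OF assms(1), of "\<lambda>w. w * exp w" "\<lambda>w. exp w + w * exp w"] xexp_deriv by blast
  have "exp z + z * exp z = (1 + z) * exp z" by (simp add: algebra_simps)
  moreover have "(1 + z) * exp z < 0" using z assms by (simp add: mult_neg_pos)
  ultimately have "(w2 - w1) * (exp z + z * exp z) < 0" using assms by (simp add: mult_pos_neg)
  with z show ?thesis by simp
qed

lemma W0_eq:
  assumes "v \<ge> -1" "v * exp v = z" shows "LambertW0 z = v"
  unfolding LambertW0_def
proof (rule the_equality)
  show "v \<ge> -1 \<and> v * exp v = z" using assms by simp
  fix w assume w: "w \<ge> -1 \<and> w * exp w = z"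
  show "w = v"
  proof (rule ccontr)
    assume "w \<noteq> v"
    then consider "w < v" | "v < w" by linarith
    then show False using xexp_inc w assms by (metis less_irrefl)
  qed
qed

lemma Wm1_eq:
  assumes "v \<le> -1" "v * exp v = z" shows "LambertWm1 z = v"
  unfolding LambertWm1_def
proof (rule the_equality)
  show "v \<le> -1 \<and> v * exp v = z" using assms by simp
  fix w assume w: "w \<le> -1 \<and> w * exp w = z"
  show "w = v"
  proof (rule ccontr)
    assume "w \<noteq> v"
    then consider "w < v" | "v < w" by linarith
    then show False using xexp_dec w assms by (metis less_irrefl)
  qed
qed

lemma W0_exists:
  fixes z :: real
  assumes "z \<ge> - exp (-1)" shows "\<exists>v \<ge> -1. v * exp v = z"
proof -
  define u where "u = max z 0"
  have "(-1) * exp (-1::real) \<le> z" using assms by simp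
  moreover have "z \<le> u * exp u"
  proof -
    have "u * 1 \<le> u * exp u" using u_def by (intro mult_left_mono) auto
    thus ?thesis unfolding u_def by linarith
  qed
  moreover have "-1 \<le> u" unfolding u_def by simp
  moreover have "continuous_on {-1..u} (\<lambda>w. w * exp w)" by (intro continuous_intros)
  ultimately show ?thesis using IVT'[of "\<lambda>w. w * exp w" "-1" z u] by auto
qed



lemma ln_ge_1_minus_inv: "0 < (t::real) \<Longrightarrow> 1 - 1/t \<le> ln t"
  using ln_le_minus_one[of "1/t"] by (simp add: ln_div)

context
  fixes K a c :: real
  assumes K: "K > 1" and a: "a > 0" and c: "c > 0"
begin

definition "gg x = a * x - ln (K + c * x)"

lemma gg_big: "\<exists>X \<ge> x0. gg X > 0"
proof -
  define X where "X = max x0 1 + 4 * (K + c) / a^2"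
  have X1: "X \<ge> 1" and Xx: "X \<ge> x0" using K c a unfolding X_def by (auto intro!: add_increasing2)
  have X2: "a^2 * X / 4 \<ge> K + c"
  proof -
    have "X \<ge> 4 * (K + c) / a^2" unfolding X_def by simp
    hence "a^2 * X \<ge> a^2 * (4 * (K + c) / a^2)" using a by (intro mult_left_mono) auto
    thus ?thesis using a by simp
  qed
  have pos: "a * X / 2 > 0" using a X1 by simp
  have e1: "exp (a * X / 2) > a * X / 2" using exp_ge_add_one_self[of "a * X / 2"] by linarith
  have "exp (a * X) = exp (a * X / 2) ^ 2" by (simp add: exp_double[symmetric] power2_eq_square exp_add[symmetric])
  also have "\<dots> > (a * X / 2) ^ 2" using e1 pos by (intro power_strict_mono) auto
  finally have e2: "exp (a * X) > (a * X / 2)^2" .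
  have "(a * X / 2)^2 = X * (a^2 * X / 4)" by (simp add: power2_eq_square)
  also have "\<dots> \<ge> X * (K + c)" using X2 X1 by (intro mult_left_mono) auto
  finally have "(a * X / 2)^2 \<ge> X * (K + c)" .
  moreover have "X * (K + c) \<ge> K + c * X" using X1 K by (simp add: algebra_simps)
  ultimately have "K + c * X < exp (a * X)" using e2 by linarith
  moreover have "K + c * X > 0" using K c X1 by (simp add: add_pos_pos)
  ultimately have "ln (K + c * X) < a * X" by (metis ln_less_cancel_iff exp_gt_zero ln_exp)
  thus ?thesis using Xx unfolding gg_def by (intro exI[of _ X]) auto
qed

lemma gg_cont: "continuous_on {0..X} gg"
  unfolding gg_def using K c
  apply (intro continuous_intros)
  apply auto
  by (smt (verit) mult_nonneg_nonneg)

lemma gg0: "gg 0 < 0" unfolding gg_def using K by simp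

lemma gg_root_exists: "\<exists>x > 0. gg x = 0"
proof -
  obtain X where X: "X \<ge> 0" "gg X > 0" using gg_big[of 0] by auto
  then obtain x where "0 \<le> x" "x \<le> X" "gg x = 0"
    using IVT'[of gg 0 0 X] gg0 gg_cont by auto
  moreover have "x \<noteq> 0" using gg0 \<open>gg x = 0\<close> by auto
  ultimately show ?thesis by (intro exI[of _ x]) auto
qed

definition "z1 = - (a / c) * exp (- (a * K / c))"

lemma gg_root_W:
  assumes "x \<ge> 0" "gg x = 0"
  defines "w \<equiv> - a * (K + c * x) / c"
  shows "w < -1" "w * exp w = z1"
proof -
  define y where "y = K + c * x"
  have yK: "y \<ge> K" using assms c unfolding y_def by simp
  have ypos: "y > 0" using yK K by simp
  have lny: "ln y = a * x" using assms(2) unfolding gg_def y_def by simp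
  have x_eq: "x = (y - K) / c" using c unfolding y_def by simp
  show "w < -1"
  proof (rule ccontr)
    assume "\<not> w < -1"
    hence "a * y / c \<le> 1" unfolding w_def y_def by simp
    hence ay: "a \<le> c / y" using c ypos by (simp add: field_simps)
    have "ln y = a * (y - K) / c" using lny x_eq by simp
    also have "\<dots> \<le> (c / y) * (y - K) / c" using ay yK c by (intro divide_right_mono mult_right_mono) auto
    also have "\<dots> = 1 - K / y" using c ypos by (simp add: field_simps)
    finally have A: "ln y \<le> 1 - K / y" .
    have "ln y = ln K + ln (y / K)" using K ypos by (simp add: ln_div)
    moreover have "ln (y / K) \<ge> 1 - K / y" using ln_ge_1_minus_inv[of "y/K"] K ypos by simp
    moreover have "ln K > 0" using K by simp
    ultimately show False using A by linarith
  qed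
  have ey: "exp (a * x) = y" using lny ypos by (metis exp_ln)
  have "w = - (a * K / c) - a * x" unfolding w_def using c by (simp add: field_simps)
  hence "exp w = exp (- (a * K / c)) / y" using ey by (simp add: exp_diff)
  hence "w * exp w = - (a * y / c) * (exp (- (a * K / c)) / y)" unfolding w_def y_def by simp
  also have "\<dots> = z1" unfolding z1_def using ypos c by (simp add: field_simps)
  finally show "w * exp w = z1" .
qed

lemma gg_root_unique:
  assumes "x \<ge> 0" "gg x = 0" "x' \<ge> 0" "gg x' = 0" shows "x = x'"
proof -
  have "LambertWm1 z1 = - a * (K + c * x) / c" using gg_root_W[OF assms(1,2)] by (intro Wm1_eq) auto
  moreover have "LambertWm1 z1 = - a * (K + c * x') / c" using gg_root_W[OF assms(3,4)] by (intro Wm1_eq) auto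
  ultimately show ?thesis using a c by (simp add: field_simps)
qed

lemma gg_pos_after:
  assumes "x1 \<ge> 0" "gg x1 = 0" "x > x1" shows "gg x > 0"
proof (rule ccontr)
  assume "\<not> gg x > 0"
  moreover have "gg x \<noteq> 0" using gg_root_unique[of x1 x] assms by auto
  ultimately have neg: "gg x < 0" by simp
  obtain X where X: "X \<ge> x" "gg X > 0" using gg_big[of x] by auto
  have "continuous_on {x..X} gg" by (rule continuous_on_subset[OF gg_cont[of X]]) (use assms in auto)
  then obtain x' where "x \<le> x'" "x' \<le> X" "gg x' = 0" using IVT'[of gg x 0 X] neg X by auto
  thus False using gg_root_unique[of x1 x'] assms by auto
qed

end


context
  fixes K c b :: real
  assumes K: "K > 1" and c: "c > 0" and b: "b = ln K"
begin

definition "YY l = K + c * l / (1 - l)"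
definition "ff l = l * b + (1 - l) * ln (K + c * l / (1 - l))"
definition "DD l = b + 1 - ln (YY l) + (c - K) / YY l"

lemma YY_gt: "0 < l \<Longrightarrow> l < 1 \<Longrightarrow> YY l > K"
  unfolding YY_def using c by simp

lemma YY_mono: "0 < l1 \<Longrightarrow> l1 < l2 \<Longrightarrow> l2 < 1 \<Longrightarrow> YY l1 < YY l2"
  unfolding YY_def using c by (simp add: field_simps)

lemma ff_deriv:
  assumes "0 < l" "l < 1" shows "(ff has_real_derivative DD l) (at l)"
proof -
  have Y: "YY l > K" using YY_gt assms by simp
  have Yp: "K + c * l / (1 - l) > 0" using Y K unfolding YY_def by simp
  have "(ff has_real_derivative (b - ln (K + c * l / (1 - l)) + (1 - l) * ((c * (1 - l) + c * l) / (1 - l)^2 / (K + c * l / (1 - l))))) (at l)"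
    unfolding ff_def using assms Yp
    by (auto intro!: derivative_eq_intros simp: power2_eq_square)
  moreover have "b - ln (K + c * l / (1 - l)) + (1 - l) * ((c * (1 - l) + c * l) / (1 - l)^2 / (K + c * l / (1 - l))) = DD l"
  proof -
    have e1: "(1 - l) * ((c * (1 - l) + c * l) / (1 - l)^2 / YY l) = c / ((1 - l) * YY l)"
    proof -
      have n1: "1 - l \<noteq> 0" "YY l \<noteq> 0" using assms Y K by auto
      have "c * (1 - l) + c * l = c" by (simp add: algebra_simps)
      thus ?thesis using n1 by (simp add: power2_eq_square divide_simps)
    qed
    have e2: "c / ((1 - l) * YY l) = 1 + (c - K) / YY l"
    proof -
      have n1: "1 - l \<noteq> 0" "YY l \<noteq> 0" using assms Y K by auto
      have Q: "(1 - l) * YY l = K * (1 - l) + c * l" unfolding YY_def using n1 by (simp add: distrib_left mult.commute)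
      have "1 + (c - K) / YY l = ((1 - l) * YY l + (c - K) * (1 - l)) / ((1 - l) * YY l)"
        using n1 by (simp add: field_simps)
      also have "(1 - l) * YY l + (c - K) * (1 - l) = c" unfolding Q by (simp add: algebra_simps)
      finally show ?thesis by linarith
    qed
    show ?thesis using e1 e2 unfolding DD_def YY_def[symmetric] by simp
  qed
  ultimately show ?thesis by simp
qed

lemma DD_mono:
  assumes "0 < l1" "l1 < l2" "l2 < 1" shows "DD l2 < DD l1"
proof -
  define y1 y2 where "y1 = YY l1" and "y2 = YY l2"
  have y1: "y1 > K" and y12: "y1 < y2" using YY_gt YY_mono assms unfolding y1_def y2_def by auto
  have "ln (y2 / y1) \<ge> 1 - y1 / y2" using ln_ge_1_minus_inv[of "y2/y1"] y1 y12 K by simp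
  moreover have "(c - K) * (y2 - y1) / (y1 * y2) > - (y2 - y1) / y2"
  proof -
    have A: "(c - K) * (y2 - y1) / (y1 * y2) > (- K) * (y2 - y1) / (y1 * y2)"
      using c y1 y12 K by (intro divide_strict_right_mono mult_strict_right_mono) auto
    have B: "(- K) * (y2 - y1) / (y1 * y2) \<ge> - (y2 - y1) / y2"
    proof -
      have "K / y1 \<le> 1" using y1 K by simp
      hence "(K / y1) * ((y2 - y1) / y2) \<le> 1 * ((y2 - y1) / y2)" using y12 y1 K by (intro mult_right_mono) auto
      thus ?thesis using y1 K y12 by (simp add: field_simps)
    qed
    show ?thesis using A B by linarith
  qed
  moreover have "DD l1 - DD l2 = ln (y2 / y1) + (c - K) * (y2 - y1) / (y1 * y2)"
    unfolding DD_def y1_def[symmetric] y2_def[symmetric] using y1 y12 K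
    by (simp add: ln_div field_simps)
  moreover have "1 - y1 / y2 = (y2 - y1) / y2" using y12 y1 K by (simp add: field_simps)
  ultimately show ?thesis by linarith
qed

definition "z2 = (c - K) / exp (1 + b)"

lemma DD_zero_W:
  assumes "0 < l" "l < 1" "DD l = 0"
  shows "LambertW0 z2 = ln (YY l) - b - 1" "exp (LambertW0 z2 + b + 1) = YY l"
proof -
  define y where "y = YY l"
  define v where "v = ln y - b - 1"
  have y: "y > K" using YY_gt assms unfolding y_def by simp
  have vgt: "v > -1" unfolding v_def b using y K by simp
  have vy: "v = (c - K) / y" using assms(3) unfolding DD_def y_def[symmetric] v_def by simp
  have ev: "exp v = y / exp (1 + b)" unfolding v_def using y K by (simp add: exp_diff algebra_simps)
  have "v * exp v = z2" unfolding z2_def using vy ev y K by simp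
  hence "LambertW0 z2 = v" using vgt by (intro W0_eq) auto
  thus "LambertW0 z2 = ln (YY l) - b - 1" unfolding v_def y_def .
  thus "exp (LambertW0 z2 + b + 1) = YY l" using y K unfolding y_def by simp
qed

lemma DD_zero_exists: "\<exists>l. 0 < l \<and> l < 1 \<and> DD l = 0"
proof -
  have eb: "exp (1 + b) = exp 1 * K" unfolding b using K by (simp add: exp_add)
  have "z2 \<ge> - exp (-1)" unfolding z2_def eb using c K
    by (simp add: field_simps exp_minus)
  then obtain v where v: "v \<ge> -1" "v * exp v = z2" using W0_exists by blast
  have "v \<noteq> -1"
  proof
    assume "v = -1"
    hence "z2 = - exp (-1)" using v by simp
    moreover have "c - K = z2 * exp (1 + b)" unfolding z2_def by simp
    ultimately have "c - K = - exp (-1) * (exp 1 * K)" using eb by simp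
    also have "\<dots> = - K" by (simp add: exp_minus)
    finally show False using c by simp
  qed
  hence vgt: "v > -1" using v by simp
  define y where "y = exp (v + b + 1)"
  have y: "y > K"
  proof -
    have "exp (v + b + 1) > exp b" using vgt by simp
    moreover have "exp b = K" using b K by simp
    ultimately show ?thesis unfolding y_def by simp
  qed
  define l where "l = (y - K) / (y - K + c)"
  have l: "0 < l" "l < 1" unfolding l_def using y c by auto
  have Yl: "YY l = y"
  proof -
    have d: "y - K + c > 0" using y c by simp
    have "1 - l = c / (y - K + c)" unfolding l_def using d by (simp add: field_simps)
    hence "c * l / (1 - l) = y - K" unfolding l_def using d c by simp
    thus ?thesis unfolding YY_def by simp
  qed
  have "v = (c - K) / y"
  proof -
    have "v * exp v = (c - K) / exp (1 + b)" using v unfolding z2_def by simp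
    moreover have "y = exp (1 + b) * exp v" unfolding y_def by (simp add: exp_add[symmetric] algebra_simps)
    ultimately show ?thesis by (simp add: field_simps)
  qed
  moreover have "ln y = v + b + 1" unfolding y_def by simp
  ultimately have "DD l = 0" unfolding DD_def Yl by simp
  thus ?thesis using l by blast
qed

end


lemma core:
  fixes K a c b C :: real and f2 :: "real \<Rightarrow> real"
  assumes K: "K > 1" and a: "a > 0" and c: "c > 0" and b: "b = ln K" and C: "C = a + b"
    and f2: "f2 = (\<lambda>l::real. l * b + (1 - l) * ln (K + c * l / (1 - l)))"
    and lam1: "lam1 = (- (1 / a) * LambertWm1 (- (a / c) * exp (- (a * K / c))) - K / c)
                / (1 - (1 / a) * LambertWm1 (- (a / c) * exp (- (a * K / c))) - K / c)"
    and lam2: "lam2 = (exp (LambertW0 ((c - K) / exp (1 + b)) + b + 1) - K)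
                / (exp (LambertW0 ((c - K) / exp (1 + b)) + b + 1) + c - K)"
  shows "{l \<in> {0<..<1}. l * C = f2 l} = {lam1}
         \<and> {l \<in> {0<..<1}. (f2 has_real_derivative 0) (at l)} = {lam2}
         \<and> max lam1 lam2 \<in> {0<..<1} \<and>
         (\<forall>l \<in> {0<..<1}. min (l * C) (f2 l)
              \<le> min (max lam1 lam2 * C) (f2 (max lam1 lam2)))"
proof -
  have bpos: "b > 0" using b K by simp
  have Cpos: "C > 0" using C a bpos by simp
  have ggd: "\<And>x. gg K a c x = a * x - ln (K + c * x)" using gg_def[OF K a c] .
  have z1d: "z1 K a c = - (a / c) * exp (- (a * K / c))" using z1_def[OF K a c] .
  obtain x1 where x1: "x1 > 0" "gg K a c x1 = 0" using gg_root_exists[OF K a c] by auto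
  have W1: "LambertWm1 (z1 K a c) = - a * (K + c * x1) / c"
    using gg_root_W[OF K a c, of x1] x1 by (intro Wm1_eq) auto
  have lam1x: "lam1 = x1 / (1 + x1)"
  proof -
    have "- (1 / a) * LambertWm1 (- (a / c) * exp (- (a * K / c))) = (K + c * x1) / c"
    proof -
      have "LambertWm1 (- (a / c) * exp (- (a * K / c))) = - a * (K + c * x1) / c"
        using W1 unfolding z1d .
      moreover have "- (1 / a) * (- a * (K + c * x1) / c) = (K + c * x1) / c" using a c by (simp add: field_simps)
      ultimately show ?thesis by simp
    qed
    moreover have "(K + c * x1) / c - K / c = x1" using c by (simp add: field_simps)
    ultimately show ?thesis unfolding lam1 by (simp add: algebra_simps)
  qed
  have lam1_01: "0 < lam1" "lam1 < 1" using x1 unfolding lam1x by auto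
  have diff: "l * C - f2 l = (1 - l) * gg K a c (l / (1 - l))" if "0 < l" "l < 1" for l
  proof -
    have "K + c * l / (1 - l) = K + c * (l / (1 - l))" by simp
    moreover have "(1 - l) * (a * (l / (1 - l))) = a * l" using that by simp
    ultimately show ?thesis unfolding f2 ggd C by (simp add: algebra_simps)
  qed
  have xl: "l / (1 - l) / (1 + l / (1 - l)) = l" if "l < 1" for l :: real
    using that by (simp add: field_simps)
  have eq1: "l * C = f2 l \<longleftrightarrow> l = lam1" if "0 < l" "l < 1" for l
  proof
    assume "l * C = f2 l"
    hence "gg K a c (l / (1 - l)) = 0" using diff[OF that] that by simp
    hence "l / (1 - l) = x1" using gg_root_unique[OF K a c, of "l / (1 - l)" x1] x1 that by auto
    thus "l = lam1" unfolding lam1x using xl[OF that(2)] by simp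
  next
    assume "l = lam1"
    hence "1 - l = 1 / (1 + x1)" unfolding lam1x using x1 by (simp add: field_simps)
    hence "l / (1 - l) = x1" unfolding \<open>l = lam1\<close> lam1x using x1 by (simp add: field_simps)
    thus "l * C = f2 l" using diff[OF that] x1 by simp
  qed
  have P1: "{l \<in> {0<..<1}. l * C = f2 l} = {lam1}"
    using eq1 lam1_01 by auto
  have f2ff: "f2 = ff K c b" using ff_def[OF K c b] unfolding f2 by auto
  have YYd: "\<And>l. YY K c l = K + c * l / (1 - l)" using YY_def[OF K c b] .
  have DDd: "\<And>l. DD K c b l = b + 1 - ln (YY K c l) + (c - K) / YY K c l" using DD_def[OF K c b] .
  have z2d: "z2 K c b = (c - K) / exp (1 + b)" using z2_def[OF K c b] .
  have YYl: "(YY K c l - K) / (YY K c l + c - K) = l" if "0 < l" "l < 1" for l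
  proof -
    have "YY K c l - K = c * (l / (1 - l))" unfolding YYd by simp
    moreover have "c * (l / (1 - l)) / (c * (l / (1 - l)) + c) = l" using that c by (simp add: field_simps)
    ultimately show ?thesis by (simp add: algebra_simps)
  qed
  have DD0: "lam2 = l" if "0 < l" "l < 1" "DD K c b l = 0" for l
    using DD_zero_W(2)[OF K c b that] YYl[OF that(1,2)] unfolding lam2 z2d by simp
  obtain l0 where l0: "0 < l0" "l0 < 1" "DD K c b l0 = 0" using DD_zero_exists[OF K c b] by auto
  have lam2_01: "0 < lam2" "lam2 < 1" and DDlam2: "DD K c b lam2 = 0" using DD0[OF l0] l0 by auto
  have der: "(f2 has_real_derivative DD K c b l) (at l)" if "0 < l" "l < 1" for l
    unfolding f2ff using ff_deriv[OF K c b that] .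
  have P2: "{l \<in> {0<..<1}. (f2 has_real_derivative 0) (at l)} = {lam2}"
  proof -
    have "(f2 has_real_derivative 0) (at l) \<longleftrightarrow> l = lam2" if "0 < l" "l < 1" for l
    proof
      assume "(f2 has_real_derivative 0) (at l)"
      hence "DD K c b l = 0" using DERIV_unique der[OF that] by blast
      thus "l = lam2" using DD0 that by auto
    next
      assume "l = lam2"
      thus "(f2 has_real_derivative 0) (at l)" using der[OF that] DDlam2 by simp
    qed
    thus ?thesis using lam2_01 by auto
  qed
  have DDpos: "DD K c b l > 0" if "0 < l" "l < lam2" for l
    using DD_mono[OF K c b that lam2_01(2)] DDlam2 by simp
  have DDneg: "DD K c b l < 0" if "lam2 < l" "l < 1" for l
    using DD_mono[OF K c b lam2_01(1) that] DDlam2 by simp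
  have inc: "f2 l1 \<le> f2 l2" if h: "0 < l1" "l1 \<le> l2" "l2 \<le> lam2" for l1 l2
  proof (cases "l1 = l2")
    case False
    hence lt: "l1 < l2" using h by simp
    have "\<exists>z. l1 < z \<and> z < l2 \<and> f2 l2 - f2 l1 = (l2 - l1) * DD K c b z"
      using h lam2_01 by (intro MVT2[OF lt] der) auto
    then obtain z where z: "l1 < z" "z < l2" "f2 l2 - f2 l1 = (l2 - l1) * DD K c b z" by blast
    have "DD K c b z > 0" using DDpos z h by simp
    hence "(l2 - l1) * DD K c b z > 0" using lt by simp
    thus ?thesis using z by linarith
  qed simp
  have dec: "f2 l2 \<le> f2 l1" if h: "lam2 \<le> l1" "l1 \<le> l2" "l2 < 1" for l1 l2
  proof (cases "l1 = l2")
    case False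
    hence lt: "l1 < l2" using h by simp
    have "\<exists>z. l1 < z \<and> z < l2 \<and> f2 l2 - f2 l1 = (l2 - l1) * DD K c b z"
      using h lam2_01 by (intro MVT2[OF lt] der) auto
    then obtain z where z: "l1 < z" "z < l2" "f2 l2 - f2 l1 = (l2 - l1) * DD K c b z" by blast
    have "DD K c b z < 0" using DDneg z h by simp
    hence "(l2 - l1) * DD K c b z < 0" using lt by (simp add: mult_pos_neg)
    thus ?thesis using z by linarith
  qed simp
  have fmax: "f2 l \<le> f2 lam2" if "0 < l" "l < 1" for l
    using inc[of l lam2] dec[of lam2 l] that by (cases "l \<le> lam2") auto
  have P3: "\<forall>l \<in> {0<..<1}. min (l * C) (f2 l) \<le> min (max lam1 lam2 * C) (f2 (max lam1 lam2))"
  proof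
    fix l :: real assume l: "l \<in> {0<..<1}"
    show "min (l * C) (f2 l) \<le> min (max lam1 lam2 * C) (f2 (max lam1 lam2))"
    proof (cases "lam2 \<le> lam1")
      case True
      have e: "lam1 * C = f2 lam1" using eq1 lam1_01 by auto
      have "min (l * C) (f2 l) \<le> lam1 * C"
      proof (cases "l \<le> lam1")
        case True thus ?thesis using Cpos by (simp add: min.coboundedI1 mult_right_mono)
      next
        case False
        hence "f2 l \<le> f2 lam1" using dec[of lam1 l] l \<open>lam2 \<le> lam1\<close> by auto
        thus ?thesis using e by (simp add: min.coboundedI2)
      qed
      thus ?thesis using True e by simp
    next
      case False
      have "lam2 * C - f2 lam2 = (1 - lam2) * gg K a c (lam2 / (1 - lam2))" using diff lam2_01 by simp
      moreover have "lam2 / (1 - lam2) > x1"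
      proof -
        have "1 - lam1 = 1 / (1 + x1)" unfolding lam1x using x1 by (simp add: field_simps)
        hence "lam1 / (1 - lam1) = x1" unfolding lam1x using x1 by (simp add: field_simps)
        moreover have "lam1 / (1 - lam1) < lam2 / (1 - lam2)" using False lam1_01 lam2_01
          by (simp add: field_simps)
        ultimately show ?thesis by simp
      qed
      ultimately have "lam2 * C - f2 lam2 > 0"
        using gg_pos_after[OF K a c, of x1 "lam2 / (1 - lam2)"] x1 lam2_01 by simp
      hence "min (lam2 * C) (f2 lam2) = f2 lam2" by simp
      moreover have "min (l * C) (f2 l) \<le> f2 lam2" using fmax l by (simp add: min.coboundedI2)
      ultimately show ?thesis using False by simp
    qed
  qed
  show ?thesis using P1 P2 P3 lam1_01 lam2_01 by (auto simp: max_def)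
qed


theorem theorem2:
  fixes P_S H_SR H_SD H_RD \<sigma>R2 \<sigma>D2 \<eta> :: real
  assumes pos: "P_S > 0" "H_SR > 0" "H_SD > 0" "H_RD > 0" "\<sigma>R2 > 0" "\<sigma>D2 > 0"
      and eta: "0 < \<eta>" "\<eta> \<le> 1"
  defines "C_SR \<equiv> ln (1 + P_S * H_SR / \<sigma>R2)"
      and "m \<equiv> P_S * H_SD / \<sigma>D2"
      and "b \<equiv> ln (1 + P_S * H_SD / \<sigma>D2)"
      and "a \<equiv> ln (1 + P_S * H_SR / \<sigma>R2) - ln (1 + P_S * H_SD / \<sigma>D2)"
      and "c \<equiv> \<eta> * H_SR * H_RD * P_S / \<sigma>D2"
  assumes apos: "a > 0"
  defines "f2 \<equiv> (\<lambda>l::real. l * b + (1 - l) * ln (1 + m + c * l / (1 - l)))"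
      and "lam1 \<equiv> (- (1 / a) * LambertWm1 (- (a / c) * exp (- (a * (1 + m) / c))) - (1 + m) / c)
                / (1 - (1 / a) * LambertWm1 (- (a / c) * exp (- (a * (1 + m) / c))) - (1 + m) / c)"
      and "lam2 \<equiv> (exp (LambertW0 ((c - (1 + m)) / exp (1 + b)) + b + 1) - (1 + m))
                / (exp (LambertW0 ((c - (1 + m)) / exp (1 + b)) + b + 1) + c - (1 + m))"
  shows "{l \<in> {0<..<1}. l * C_SR = f2 l} = {lam1}
         \<and> {l \<in> {0<..<1}. (f2 has_real_derivative 0) (at l)} = {lam2}
         \<and> max lam1 lam2 \<in> {0<..<1} \<and>
         (\<forall>l \<in> {0<..<1}. min (l * C_SR) (f2 l)
              \<le> min (max lam1 lam2 * C_SR) (f2 (max lam1 lam2)))"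
  proof -
  have m: "m > 0" unfolding m_def using pos by simp
  have K: "1 + m > 1" using m by simp
  have cpos: "c > 0" unfolding c_def using pos eta by simp
  have bK: "b = ln (1 + m)" unfolding b_def m_def ..
  have CE: "C_SR = a + b" unfolding C_SR_def a_def b_def by simp
  have F: "f2 = (\<lambda>l::real. l * b + (1 - l) * ln (1 + m + c * l / (1 - l)))" unfolding f2_def by (rule refl)
  have L1: "lam1 = (- (1 / a) * LambertWm1 (- (a / c) * exp (- (a * (1 + m) / c))) - (1 + m) / c)
                / (1 - (1 / a) * LambertWm1 (- (a / c) * exp (- (a * (1 + m) / c))) - (1 + m) / c)"
    unfolding lam1_def by (rule refl)
  have L2: "lam2 = (exp (LambertW0 ((c - (1 + m)) / exp (1 + b)) + b + 1) - (1 + m))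
                / (exp (LambertW0 ((c - (1 + m)) / exp (1 + b)) + b + 1) + c - (1 + m))"
    unfolding lam2_def by (rule refl)
  show ?thesis using core[OF K apos cpos bK CE F L1 L2] .
qed

end
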